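(* Let $G$ be an infinite finitely generated group and let $p\in\mathbb{N}$, $p\ge 2$. Then $HX_0(G,\mathbb{Z}_p)=0$. Equivalently: for every function $c\colon G\to\mathbb{Z}_p$ there exist $R>0$ and a $1$-chain $\psi=\sum_{x,y\in G}\psi_{[x,y]}[x,y]$ with coefficients $\psi_{[x,y]}\in\mathbb{Z}_p$ and $\psi_{[x,y]}=0$ whenever $d(x,y)\ge R$, such that $\partial\psi=c$.
   Context: Fix a finite symmetric generating set $S$ of $G$ and let $d$ be the word metric on $G$ with respect to $S$ (equivalently the path metric of the Cayley graph $\Gamma_G$). For an abelian group $A$, let $CX_0(G,A)$ be the group of all functions $G\to A$ (formal sums $\sum_{x\in G}c_x x$, possibly infinite), and let $CX_1(G,A)$ be the group of formal (possibly infinite) $1$-chains $c=\sum_{x,y\in G}c_{[x,y]}[x,y]$ with $c_{[x,y]}\in A$ such that for each $c$ there is $R>0$ with $c_{[x,y]}=0$ whenever $d(x,y)\ge R$. The differential $\partial\colon CX_1(G,A)\to CX_0(G,A)$ is the $A$-linear extension of $\partial[x,y]=y-x$ (well defined since, by the bounded-range condition and local finiteness, each vertex receives finitely many contributions). The $0$-th coarse (locally finite) homology is $HX_0(G,A)=CX_0(G,A)/\operatorname{Im}\partial$. Here $\mathbb{Z}_p$ is the cyclic group of order $p$. *)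

theory Defs
  imports "HOL-Algebra.Algebra" "HOL-Number_Theory.Cong"
begin

definition word_prod :: "('a, 'b) monoid_scheme \<Rightarrow> 'a list \<Rightarrow> 'a" where
  "word_prod G ws = foldr (\<lambda>s g. s \<otimes>\<^bsub>G\<^esub> g) ws \<one>\<^bsub>G\<^esub>"

definition word_length :: "('a, 'b) monoid_scheme \<Rightarrow> 'a set \<Rightarrow> 'a \<Rightarrow> nat" where
  "word_length G S g = (LEAST n. \<exists>ws. length ws = n \<and> set ws \<subseteq> S \<and> word_prod G ws = g)"

definition word_dist :: "('a, 'b) monoid_scheme \<Rightarrow> 'a set \<Rightarrow> 'a \<Rightarrow> 'a \<Rightarrow> nat" where
  "word_dist G S x y = word_length G S (inv\<^bsub>G\<^esub> x \<otimes>\<^bsub>G\<^esub> y)"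

text \<open>Boundary of a 1-chain psi of range < R: (d psi)(v) = sum_x psi[x,v] - sum_y psi[v,y],
  where only pairs at distance < R contribute (all others have coefficient 0).\<close>
definition chain_boundary ::
  "('a, 'b) monoid_scheme \<Rightarrow> 'a set \<Rightarrow> nat \<Rightarrow> ('a \<Rightarrow> 'a \<Rightarrow> int) \<Rightarrow> 'a \<Rightarrow> int" where
  "chain_boundary G S R psi v =
     (\<Sum>x\<in>{x\<in>carrier G. word_dist G S x v < R}. psi x v)
   - (\<Sum>y\<in>{y\<in>carrier G. word_dist G S v y < R}. psi v y)"

end

theory Submission
  imports Defs
begin

locale mg =
  fixes V :: "'a set" and d :: "'a \<Rightarrow> 'a \<Rightarrow> nat" and r0 :: 'a
  assumes d_refl: "x \<in> V \<Longrightarrow> d x x = 0"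
    and d_sym: "x \<in> V \<Longrightarrow> y \<in> V \<Longrightarrow> d x y = d y x"
    and d_tri: "x \<in> V \<Longrightarrow> y \<in> V \<Longrightarrow> z \<in> V \<Longrightarrow> d x z \<le> d x y + d y z"
    and d_step: "x \<in> V \<Longrightarrow> y \<in> V \<Longrightarrow> d x y = Suc n \<Longrightarrow> \<exists>z\<in>V. d x z = 1 \<and> d z y = n"
    and ball_fin: "x \<in> V \<Longrightarrow> finite {y\<in>V. d x y \<le> n}"
    and inf: "infinite V"
    and r0V: "r0 \<in> V"
begin

abbreviation l where "l v \<equiv> d r0 v"

definition DD where "DD = {v\<in>V. \<forall>n. \<exists>u\<in>V. n \<le> l u \<and> l v + d v u = l u}"

lemma far: "\<exists>u\<in>V. n \<le> l u"
proof (rule ccontr)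
  assume "\<not> ?thesis"
  then have "V \<subseteq> {y\<in>V. d r0 y \<le> n}" by force
  then show False using ball_fin[OF r0V, of n] inf finite_subset by blast
qed

lemma zero_in_DD: assumes "v \<in> V" "l v = 0" shows "v \<in> DD"
  unfolding DD_def
proof (intro CollectI conjI allI)
  fix n
  obtain u where u: "u \<in> V" "n \<le> l u" using far by blast
  have "d v u \<le> d v r0 + l u" using d_tri[OF assms(1) r0V u(1)] .
  moreover have "d v r0 = 0" using d_sym[OF assms(1) r0V] assms(2) by simp
  moreover have "l u \<le> l v + d v u" using d_tri[OF r0V assms(1) u(1)] .
  ultimately show "\<exists>u\<in>V. n \<le> l u \<and> l v + d v u = l u" using u assms by (intro bexI[of _ u]) auto
qed (use assms in auto)

lemma DD_down: assumes "w \<in> DD" "u \<in> V" "l u + d u w = l w" shows "u \<in> DD"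
  unfolding DD_def
proof (intro CollectI conjI allI)
  fix n
  have wV: "w \<in> V" using assms(1) DD_def by auto
  obtain x where x: "x \<in> V" "n \<le> l x" "l w + d w x = l x" using assms(1) unfolding DD_def by blast
  have "d u x \<le> d u w + d w x" using d_tri[OF assms(2) wV x(1)] .
  moreover have "l x \<le> l u + d u x" using d_tri[OF r0V assms(2) x(1)] .
  ultimately show "\<exists>x\<in>V. n \<le> l x \<and> l u + d u x = l x" using x assms by (intro bexI[of _ x]) auto
qed (use assms in auto)

lemma DD_up: assumes "v \<in> DD" shows "\<exists>w\<in>V. d v w = 1 \<and> l w = Suc (l v) \<and> w \<in> DD"
proof (rule ccontr)
  assume H: "\<not> ?thesis"
  have vV: "v \<in> V" using assms DD_def by auto
  let ?N = "{w\<in>V. d v w \<le> 1 \<and> l w = Suc (l v)}"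
  have fin: "finite ?N" using ball_fin[OF vV, of 1] by (rule finite_subset[rotated]) auto
  have "\<forall>w\<in>?N. eventually (\<lambda>n. \<forall>u\<in>V. n \<le> l u \<longrightarrow> l w + d w u \<noteq> l u) sequentially"
  proof
    fix w assume w: "w \<in> ?N"
    have wV: "w \<in> V" and w1: "d v w \<le> 1" and w2: "l w = Suc (l v)" using w by auto
    have "l w \<le> l v + d v w" using d_tri[OF r0V vV wV] .
    then have "d v w = 1" using w1 w2 by linarith
    then have "w \<notin> DD" using H wV w2 by blast
    then obtain n where n: "\<forall>u\<in>V. \<not> (n \<le> l u \<and> l w + d w u = l u)" using w unfolding DD_def by auto
    show "eventually (\<lambda>n. \<forall>u\<in>V. n \<le> l u \<longrightarrow> l w + d w u \<noteq> l u) sequentially"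
      unfolding eventually_sequentially using n by (intro exI[of _ n]) auto
  qed
  from eventually_ball_finite[OF fin this]
  obtain N where N: "\<forall>m\<ge>N. \<forall>w\<in>?N. \<forall>u\<in>V. m \<le> l u \<longrightarrow> l w + d w u \<noteq> l u"
    unfolding eventually_sequentially by blast
  obtain u where u: "u \<in> V" "N + Suc (l v) \<le> l u" "l v + d v u = l u" using assms unfolding DD_def by blast
  then have "d v u \<noteq> 0" by linarith
  then obtain k where k: "d v u = Suc k" using not0_implies_Suc by blast
  then obtain w where w: "w \<in> V" "d v w = 1" "d w u = k" using d_step[OF vV u(1)] by blast
  have "l w \<le> l v + 1" using d_tri[OF r0V vV w(1)] w by simp
  moreover have "l u \<le> l w + k" using d_tri[OF r0V w(1) u(1)] w by simp
  ultimately have "l w = Suc (l v)" "l w + d w u = l u" using u k w by auto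
  moreover have "N \<le> l u" using u by linarith
  ultimately show False using N w u by auto
qed

lemma nonDD_down: assumes "v \<in> V" "v \<notin> DD" shows "\<exists>w\<in>V. d v w = 1 \<and> Suc (l w) = l v"
proof -
  have "l v \<noteq> 0" using zero_in_DD assms by blast
  then obtain k where k: "d v r0 = Suc k" using d_sym[OF assms(1) r0V] not0_implies_Suc by metis
  then obtain w where w: "w \<in> V" "d v w = 1" "d w r0 = k" using d_step[OF assms(1) r0V] by blast
  then show ?thesis using k d_sym[OF assms(1) r0V] d_sym[OF w(1) r0V] by auto
qed


lemma DD_V: "DD \<subseteq> V" unfolding DD_def by auto

definition f where "f v = (if v \<in> DD then (SOME w. w\<in>V \<and> d v w = 1 \<and> l w = Suc (l v) \<and> w \<in> DD)
   else (SOME w. w\<in>V \<and> d v w = 1 \<and> Suc (l w) = l v))"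

lemma f_D: assumes "v \<in> DD" shows "f v \<in> V" "d v (f v) = 1" "l (f v) = Suc (l v)" "f v \<in> DD"
proof -
  have "\<exists>w. w\<in>V \<and> d v w = 1 \<and> l w = Suc (l v) \<and> w \<in> DD" using DD_up[OF assms] by blast
  from someI_ex[OF this] show "f v \<in> V" "d v (f v) = 1" "l (f v) = Suc (l v)" "f v \<in> DD"
    using assms unfolding f_def by auto
qed

lemma f_N: assumes "v \<in> V" "v \<notin> DD" shows "f v \<in> V" "d v (f v) = 1" "Suc (l (f v)) = l v"
proof -
  have "\<exists>w. w\<in>V \<and> d v w = 1 \<and> Suc (l w) = l v" using nonDD_down[OF assms] by blast
  from someI_ex[OF this] show "f v \<in> V" "d v (f v) = 1" "Suc (l (f v)) = l v"
    using assms unfolding f_def by auto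
qed

lemma f_V: "v \<in> V \<Longrightarrow> f v \<in> V" by (cases "v \<in> DD") (simp_all add: f_D f_N)
lemma f_d: "v \<in> V \<Longrightarrow> d v (f v) = 1" by (cases "v \<in> DD") (simp_all add: f_D f_N)
lemma f_d': "v \<in> V \<Longrightarrow> d (f v) v = 1" using f_d[of v] d_sym[of v "f v"] f_V[of v] by simp

definition h :: "'a \<Rightarrow> int" where "h v = (if v \<in> DD then int (l v) else - int (l v) - 1)"

lemma h_f: "v \<in> V \<Longrightarrow> h (f v) \<ge> h v + 1"
proof (cases "v \<in> DD")
  case True then show ?thesis using f_D[OF True] unfolding h_def by auto
next
  case False
  assume vV: "v \<in> V"
  have "Suc (l (f v)) = l v" using f_N[OF vV False] by simp
  then show ?thesis using False unfolding h_def by auto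
qed

lemma fpow_V: "v \<in> V \<Longrightarrow> (f^^k) v \<in> V"
  by (induction k) (auto simp: f_V)

lemma h_pow: "v \<in> V \<Longrightarrow> h ((f^^k) v) \<ge> h v + int k"
proof (induction k)
  case (Suc k)
  then show ?case using h_f[OF fpow_V[OF Suc.prems, of k]] by auto
qed simp

lemma cyc: "v \<in> V \<Longrightarrow> (f^^k) v = v \<Longrightarrow> k = 0"
  using h_pow[of v k] by auto

lemma geo_lemma: "v \<in> V \<Longrightarrow> (f^^k) v = a \<Longrightarrow>
   (v \<in> DD \<and> l v \<le> l a) \<or> (\<exists>u\<in>V. u \<notin> DD \<and> l u \<le> Suc (l a) \<and> l u + d u v = l v)"
proof (induction k arbitrary: v)
  case 0
  then show ?case using d_refl by auto
next
  case (Suc k)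
  have fv: "f v \<in> V" using f_V Suc.prems by auto
  have "(f^^k) (f v) = (f^^Suc k) v" by (simp only: funpow_Suc_right comp_def)
  then have "(f^^k) (f v) = a" using Suc.prems by simp
  from Suc.IH[OF fv this] show ?case
  proof
    assume A: "f v \<in> DD \<and> l (f v) \<le> l a"
    show ?thesis
    proof (cases "v \<in> DD")
      case True then show ?thesis using f_D[OF True] A by auto
    next
      case False then show ?thesis using f_N[OF Suc.prems(1) False] A Suc.prems d_refl by (intro disjI2 bexI[of _ v]) auto
    qed
  next
    assume "\<exists>u\<in>V. u \<notin> DD \<and> l u \<le> Suc (l a) \<and> l u + d u (f v) = l (f v)"
    then obtain u where u: "u \<in> V" "u \<notin> DD" "l u \<le> Suc (l a)" "l u + d u (f v) = l (f v)" by blast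
    have vN: "v \<notin> DD"
    proof
      assume "v \<in> DD"
      then have "f v \<in> DD" using f_D by auto
      then show False using DD_down u by blast
    qed
    have "d u v \<le> d u (f v) + d (f v) v" using d_tri[OF u(1) fv Suc.prems(1)] .
    moreover have "l v \<le> l u + d u v" using d_tri[OF r0V u(1) Suc.prems(1)] .
    ultimately show ?thesis using u f_N[OF Suc.prems(1) vN] f_d'[OF Suc.prems(1)]
      by (intro disjI2 bexI[of _ u]) auto
  qed
qed

definition Anc where "Anc a = {v\<in>V. \<exists>k. (f^^k) v = a}"

lemma Anc_fin: assumes aV: "a \<in> V" shows "finite (Anc a)"
proof -
  let ?U = "{u\<in>V. u \<notin> DD \<and> l u \<le> Suc (l a)}"
  have fin: "finite ?U" using ball_fin[OF r0V, of "Suc (l a)"] by (rule finite_subset[rotated]) auto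
  have "\<forall>u\<in>?U. eventually (\<lambda>n. \<forall>x\<in>V. n \<le> l x \<longrightarrow> l u + d u x \<noteq> l x) sequentially"
  proof
    fix u assume u: "u \<in> ?U"
    then obtain n where n: "\<forall>x\<in>V. \<not> (n \<le> l x \<and> l u + d u x = l x)" unfolding DD_def by auto
    show "eventually (\<lambda>n. \<forall>x\<in>V. n \<le> l x \<longrightarrow> l u + d u x \<noteq> l x) sequentially"
      unfolding eventually_sequentially using n by (intro exI[of _ n]) auto
  qed
  from eventually_ball_finite[OF fin this]
  obtain N where N: "\<forall>m\<ge>N. \<forall>u\<in>?U. \<forall>x\<in>V. m \<le> l x \<longrightarrow> l u + d u x \<noteq> l x"
    unfolding eventually_sequentially by blast
  have "Anc a \<subseteq> {y\<in>V. d r0 y \<le> max (l a) N}"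
  proof
    fix v assume "v \<in> Anc a"
    then obtain k where v: "v \<in> V" "(f^^k) v = a" unfolding Anc_def by auto
    from geo_lemma[OF v] show "v \<in> {y\<in>V. d r0 y \<le> max (l a) N}"
    proof
      assume "v \<in> DD \<and> l v \<le> l a" then show ?thesis using v by auto
    next
      assume "\<exists>u\<in>V. u \<notin> DD \<and> l u \<le> Suc (l a) \<and> l u + d u v = l v"
      then obtain u where "u \<in> ?U" "l u + d u v = l v" by auto
      then have "\<not> N \<le> l v" using N v by blast
      then show ?thesis using v by auto
    qed
  qed
  then show ?thesis using ball_fin[OF r0V] finite_subset by blast
qed

definition Pre where "Pre u = {x\<in>V. f x = u}"

lemma Pre_fin: "u \<in> V \<Longrightarrow> finite (Pre u)"
  using ball_fin[of u 1] unfolding Pre_def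
  by (rule finite_subset[rotated]) (auto simp: f_d')

lemma Anc_rec: assumes "u \<in> V" shows "Anc u = insert u (\<Union>x\<in>Pre u. Anc x)"
proof
  show "Anc u \<subseteq> insert u (\<Union>x\<in>Pre u. Anc x)"
  proof
    fix v assume "v \<in> Anc u"
    then obtain k where v: "v \<in> V" "(f^^k) v = u" unfolding Anc_def by auto
    show "v \<in> insert u (\<Union>x\<in>Pre u. Anc x)"
    proof (cases k)
      case 0 then show ?thesis using v by auto
    next
      case (Suc j)
      then have "(f^^j) v \<in> Pre u" using v fpow_V unfolding Pre_def by auto
      moreover have "v \<in> Anc ((f^^j) v)" using v unfolding Anc_def by auto
      ultimately show ?thesis by blast
    qed
  qed
next
  show "insert u (\<Union>x\<in>Pre u. Anc x) \<subseteq> Anc u"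
  proof
    fix v assume "v \<in> insert u (\<Union>x\<in>Pre u. Anc x)"
    then show "v \<in> Anc u"
    proof
      assume "v = u" then show ?thesis using assms unfolding Anc_def by (auto intro: exI[of _ 0])
    next
      assume "v \<in> (\<Union>x\<in>Pre u. Anc x)"
      then obtain x k where "v \<in> V" "(f^^k) v = x" "f x = u" unfolding Anc_def Pre_def by auto
      then show ?thesis unfolding Anc_def by (auto intro!: exI[of _ "Suc k"])
    qed
  qed
qed

lemma u_notin: assumes "u \<in> V" "x \<in> Pre u" shows "u \<notin> Anc x"
proof
  assume "u \<in> Anc x"
  then obtain k where "(f^^k) u = x" unfolding Anc_def by auto
  then have "(f^^(Suc k)) u = u" using assms unfolding Pre_def by auto
  then show False using cyc assms by blast
qed

lemma pow_add_eq: "(f^^(m + k)) v = (f^^m) ((f^^k) v)"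
  by (simp add: funpow_add)

lemma Anc_disj: assumes "u \<in> V" "x \<in> Pre u" "y \<in> Pre u" "x \<noteq> y" shows "Anc x \<inter> Anc y = {}"
proof -
  have gen: False if "v \<in> V" "(f^^k) v = x" "(f^^j) v = y" "k \<le> j" "x \<in> Pre u" "y \<in> Pre u" "x \<noteq> y"
    for v k j x y
  proof -
    define m where "m = j - k"
    have m: "j = m + k" using that(4) unfolding m_def by simp
    have "(f^^m) x = y" using that(2,3) m pow_add_eq[of m k v] by simp
    moreover have "m \<noteq> 0"
    proof
      assume "m = 0" then show False using calculation that(7) by simp
    qed
    then obtain m' where m': "m = Suc m'" using not0_implies_Suc by blast
    have "(f^^m') (f x) = (f^^Suc m') x" by (simp only: funpow_Suc_right comp_def)
    ultimately have "(f^^m') (f x) = y" using m' by simp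
    then have "(f^^m') u = y" using that unfolding Pre_def by auto
    then have "(f^^(Suc m')) u = u" using that unfolding Pre_def by auto
    then show False using cyc assms(1) by blast
  qed
  show ?thesis
  proof (rule ccontr)
    assume "\<not> ?thesis"
    then obtain v k j where "v \<in> V" "(f^^k) v = x" "(f^^j) v = y" unfolding Anc_def by auto
    then show False using gen[of v k x j y] gen[of v j y k x] assms by (cases "k \<le> j") auto
  qed
qed

theorem main: fixes c :: "'a \<Rightarrow> int" shows "\<exists>psi. (\<forall>x\<in>V. \<forall>y\<in>V. d x y \<ge> 2 \<longrightarrow> psi x y = 0) \<and>
   (\<forall>v\<in>V. (\<Sum>x\<in>{x\<in>V. d x v < 2}. psi x v) - (\<Sum>y\<in>{y\<in>V. d v y < 2}. psi v y) = c v)"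
proof -
  define w where "w u = sum c (Anc u)" for u
  have w_rec: "w u = c u + (\<Sum>x\<in>Pre u. w x)" if uV: "u \<in> V" for u
  proof -
    have fins: "\<forall>x\<in>Pre u. finite (Anc x)" using Anc_fin unfolding Pre_def by auto
    have "w u = c u + sum c (\<Union>x\<in>Pre u. Anc x)"
      unfolding w_def Anc_rec[OF uV]
      by (rule sum.insert) (use fins Pre_fin[OF uV] u_notin[OF uV] in auto)
    also have "sum c (\<Union>x\<in>Pre u. Anc x) = (\<Sum>x\<in>Pre u. w x)"
      unfolding w_def by (rule sum.UNION_disjoint) (use fins Pre_fin[OF uV] Anc_disj[OF uV] in auto)
    finally show ?thesis .
  qed
  define psi where "psi x y = (if x \<in> V \<and> y = f x then - w x else 0)" for x y
  have "(\<Sum>x\<in>{x\<in>V. d x v < 2}. psi x v) - (\<Sum>y\<in>{y\<in>V. d v y < 2}. psi v y) = c v" if vV: "v \<in> V" for v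
  proof -
    have f1: "finite {x\<in>V. d x v < 2}" using ball_fin[OF vV, of 1]
      by (rule finite_subset[rotated]) (use d_sym vV in fastforce)
    have f2: "finite {y\<in>V. d v y < 2}" using ball_fin[OF vV, of 1]
      by (rule finite_subset[rotated]) auto
    have "(\<Sum>x\<in>{x\<in>V. d x v < 2}. psi x v) = (\<Sum>x\<in>{x\<in>V. d x v < 2}. if f x = v then - w x else 0)"
      unfolding psi_def by (rule sum.cong) auto
    also have "\<dots> = (\<Sum>x\<in>{x\<in>{x\<in>V. d x v < 2}. f x = v}. - w x)"
      by (rule sum.inter_filter[symmetric, OF f1])
    also have "{x\<in>{x\<in>V. d x v < 2}. f x = v} = Pre v" unfolding Pre_def using f_d by auto
    finally have s1: "(\<Sum>x\<in>{x\<in>V. d x v < 2}. psi x v) = - (\<Sum>x\<in>Pre v. w x)"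
      by (simp add: sum_negf)
    have "(\<Sum>y\<in>{y\<in>V. d v y < 2}. psi v y) = (\<Sum>y\<in>{y\<in>V. d v y < 2}. if y = f v then - w v else 0)"
      unfolding psi_def using vV by (intro sum.cong) auto
    also have "\<dots> = - w v" using f2 f_V[OF vV] f_d[OF vV] by (simp add: sum.delta')
    finally show ?thesis using s1 w_rec[OF vV] by simp
  qed
  moreover have "\<forall>x\<in>V. \<forall>y\<in>V. d x y \<ge> 2 \<longrightarrow> psi x y = 0" unfolding psi_def using f_d by auto
  ultimately show ?thesis by blast
qed

end

context
  fixes G :: "('a, 'b) monoid_scheme" (structure) and S :: "'a set"
  assumes grp: "group G" and SG: "S \<subseteq> carrier G" and Sinv: "\<forall>s\<in>S. inv\<^bsub>G\<^esub> s \<in> S"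
    and gen: "generate G S = carrier G" and finS: "finite S"
begin

interpretation group G by (rule grp)

lemma wp_carrier: "set ws \<subseteq> S \<Longrightarrow> word_prod G ws \<in> carrier G"
  by (induction ws) (use SG in \<open>auto simp: word_prod_def\<close>)

lemma wp_append: "set xs \<subseteq> S \<Longrightarrow> set ys \<subseteq> S \<Longrightarrow> word_prod G (xs @ ys) = word_prod G xs \<otimes> word_prod G ys"
proof (induction xs)
  case Nil then show ?case using wp_carrier by (simp add: word_prod_def)
next
  case (Cons x xs)
  then have "x \<in> carrier G" using SG by auto
  then show ?case using Cons wp_carrier[of xs] wp_carrier[of ys]
    by (simp add: word_prod_def m_assoc)
qed

lemma gen_word: "g \<in> generate G S \<Longrightarrow> \<exists>ws. set ws \<subseteq> S \<and> word_prod G ws = g"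
proof (induction rule: generate.induct)
  case one then show ?case by (intro exI[of _ "[]"]) (simp add: word_prod_def)
next
  case (incl h) then show ?case using SG by (intro exI[of _ "[h]"]) (auto simp: word_prod_def)
next
  case (inv h) then show ?case using SG Sinv by (intro exI[of _ "[inv h]"]) (auto simp: word_prod_def)
next
  case (eng h1 h2)
  then obtain xs ys where "set xs \<subseteq> S" "word_prod G xs = h1" "set ys \<subseteq> S" "word_prod G ys = h2" by blast
  then show ?case using wp_append by (intro exI[of _ "xs @ ys"]) auto
qed

lemma wl_word: "g \<in> carrier G \<Longrightarrow> \<exists>ws. length ws = word_length G S g \<and> set ws \<subseteq> S \<and> word_prod G ws = g"
proof -
  assume "g \<in> carrier G"
  then obtain ws where "set ws \<subseteq> S \<and> word_prod G ws = g" using gen_word gen by blast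
  then have "\<exists>n ws. length ws = n \<and> set ws \<subseteq> S \<and> word_prod G ws = g" by blast
  from LeastI_ex[OF this] show ?thesis unfolding word_length_def .
qed

lemma wl_le: "set ws \<subseteq> S \<Longrightarrow> word_length G S (word_prod G ws) \<le> length ws"
  unfolding word_length_def by (rule Least_le) blast

lemma wl_one: "word_length G S \<one> = 0"
  using wl_le[of "[]"] by (simp add: word_prod_def)

lemma wl_mult: "g \<in> carrier G \<Longrightarrow> h \<in> carrier G \<Longrightarrow> word_length G S (g \<otimes> h) \<le> word_length G S g + word_length G S h"
proof -
  assume g: "g \<in> carrier G" and h: "h \<in> carrier G"
  obtain xs where xs: "length xs = word_length G S g" "set xs \<subseteq> S" "word_prod G xs = g" using wl_word[OF g] by blast
  obtain ys where ys: "length ys = word_length G S h" "set ys \<subseteq> S" "word_prod G ys = h" using wl_word[OF h] by blast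
  have "word_length G S (word_prod G (xs @ ys)) \<le> length (xs @ ys)" using wl_le[of "xs @ ys"] xs ys by auto
  then show ?thesis using xs ys wp_append by auto
qed

lemma wp_rev_inv: "set ws \<subseteq> S \<Longrightarrow> word_prod G (rev (map (\<lambda>x. inv x) ws)) = inv (word_prod G ws)"
proof (induction ws)
  case Nil then show ?case by (simp add: word_prod_def)
next
  case (Cons s ws)
  have sS: "s \<in> carrier G" "inv s \<in> S" using Cons SG Sinv by auto
  have s1: "set (rev (map (\<lambda>x. inv x) ws)) \<subseteq> S" using Cons.prems Sinv by (auto simp: subset_iff)
  have "word_prod G (rev (map (\<lambda>x. inv x) (s # ws))) = word_prod G (rev (map (\<lambda>x. inv x) ws)) \<otimes> word_prod G [inv s]"
    using wp_append[OF s1, of "[inv s]"] sS by simp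
  also have "\<dots> = inv (word_prod G ws) \<otimes> inv s" using Cons sS by (simp add: word_prod_def)
  also have "\<dots> = inv (s \<otimes> word_prod G ws)" using sS Cons wp_carrier by (simp add: inv_mult_group)
  finally show ?case by (simp add: word_prod_def)
qed

lemma wl_inv: "g \<in> carrier G \<Longrightarrow> word_length G S (inv g) \<le> word_length G S g"
proof -
  assume g: "g \<in> carrier G"
  obtain xs where xs: "length xs = word_length G S g" "set xs \<subseteq> S" "word_prod G xs = g" using wl_word[OF g] by blast
  have "set (rev (map (\<lambda>x. inv x) xs)) \<subseteq> S" using xs(2) Sinv by (auto simp: subset_iff)
  from wl_le[OF this] show ?thesis using xs wp_rev_inv by auto
qed

lemma mg_inst: assumes infG: "infinite (carrier G)" shows "mg (carrier G) (word_dist G S) \<one>"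
proof (intro mg.intro)
  fix x assume "x \<in> carrier G" then show "word_dist G S x x = 0" by (simp add: word_dist_def wl_one)
next
  fix x y assume x: "x \<in> carrier G" and y: "y \<in> carrier G"
  have e: "inv y \<otimes> x = inv (inv x \<otimes> y)" using x y by (simp add: inv_mult_group)
  have e2: "inv x \<otimes> y = inv (inv y \<otimes> x)" using x y by (simp add: inv_mult_group)
  show "word_dist G S x y = word_dist G S y x" unfolding word_dist_def
    using wl_inv[of "inv x \<otimes> y"] wl_inv[of "inv y \<otimes> x"] e e2 x y by fastforce
next
  fix x y z assume x: "x \<in> carrier G" and y: "y \<in> carrier G" and z: "z \<in> carrier G"
  have "inv x \<otimes> z = (inv x \<otimes> y) \<otimes> (inv y \<otimes> z)" using x y z
    by (simp add: m_assoc[symmetric]) (simp add: m_assoc r_inv)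
  then show "word_dist G S x z \<le> word_dist G S x y + word_dist G S y z"
    unfolding word_dist_def using wl_mult x y z by simp
next
  fix x y n assume x: "x \<in> carrier G" and y: "y \<in> carrier G" and dn: "word_dist G S x y = Suc n"
  obtain ws where ws: "length ws = Suc n" "set ws \<subseteq> S" "word_prod G ws = inv x \<otimes> y"
    using wl_word[of "inv x \<otimes> y"] x y dn unfolding word_dist_def by auto
  then obtain s ws' where sw: "ws = s # ws'" by (cases ws) auto
  have s: "s \<in> carrier G" "s \<in> S" using sw ws SG by auto
  have ws': "set ws' \<subseteq> S" "length ws' = n" using sw ws by auto
  define z where "z = x \<otimes> s"
  have zc: "z \<in> carrier G" using x s z_def by simp
  have "inv x \<otimes> z = s" using x s unfolding z_def by (simp add: m_assoc[symmetric])
  then have d1: "word_dist G S x z \<le> 1" using wl_le[of "[s]"] s unfolding word_dist_def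
    by (simp add: word_prod_def)
  have "inv z \<otimes> y = word_prod G ws'"
  proof -
    have "inv z \<otimes> y = inv s \<otimes> (inv x \<otimes> y)" unfolding z_def using x y s
      by (simp add: inv_mult_group m_assoc)
    also have "\<dots> = inv s \<otimes> (s \<otimes> word_prod G ws')" using ws sw by (simp add: word_prod_def)
    finally show ?thesis using s wp_carrier[OF ws'(1)] by (simp add: m_assoc[symmetric])
  qed
  then have d2: "word_dist G S z y \<le> n" using wl_le[OF ws'(1)] ws' unfolding word_dist_def by simp
  have "word_dist G S x y \<le> word_dist G S x z + word_dist G S z y"
  proof -
    have "inv x \<otimes> y = (inv x \<otimes> z) \<otimes> (inv z \<otimes> y)" using x y zc
      by (simp add: m_assoc[symmetric]) (simp add: m_assoc r_inv)
    then show ?thesis unfolding word_dist_def using wl_mult x y zc by simp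
  qed
  then show "\<exists>z\<in>carrier G. word_dist G S x z = 1 \<and> word_dist G S z y = n"
    using d1 d2 dn zc by (intro bexI[of _ z]) auto
next
  fix x n assume x: "x \<in> carrier G"
  have "{y\<in>carrier G. word_dist G S x y \<le> n} \<subseteq> (\<lambda>ws. x \<otimes> word_prod G ws) ` {ws. set ws \<subseteq> S \<and> length ws \<le> n}"
  proof
    fix y assume y: "y \<in> {y\<in>carrier G. word_dist G S x y \<le> n}"
    obtain ws where ws: "length ws = word_length G S (inv x \<otimes> y)" "set ws \<subseteq> S" "word_prod G ws = inv x \<otimes> y"
      using wl_word[of "inv x \<otimes> y"] x y by auto
    have "x \<otimes> word_prod G ws = y" using ws x y by (simp add: m_assoc[symmetric])
    then show "y \<in> (\<lambda>ws. x \<otimes> word_prod G ws) ` {ws. set ws \<subseteq> S \<and> length ws \<le> n}"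
      using ws y unfolding word_dist_def by force
  qed
  then show "finite {y\<in>carrier G. word_dist G S x y \<le> n}"
    using finite_lists_length_le[OF finS, of n] finite_subset by blast
next
  show "infinite (carrier G)" by (rule infG)
next
  show "\<one> \<in> carrier G" by simp
qed

end

theorem lemma1:
  fixes G :: "('a, 'b) monoid_scheme" and S :: "'a set" and p :: nat
  assumes "group G"
    and "finite S" and "S \<subseteq> carrier G"
    and "\<forall>s\<in>S. inv\<^bsub>G\<^esub> s \<in> S"
    and "generate G S = carrier G"
    and "infinite (carrier G)"
    and "p \<ge> 2"
  shows "\<forall>c :: 'a \<Rightarrow> int. \<exists>(R::nat) (psi :: 'a \<Rightarrow> 'a \<Rightarrow> int). R > 0 \<and>
           (\<forall>x\<in>carrier G. \<forall>y\<in>carrier G. word_dist G S x y \<ge> R \<longrightarrow> [psi x y = 0] (mod int p)) \<and>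
           (\<forall>v\<in>carrier G. [chain_boundary G S R psi v = c v] (mod int p))"
proof
  fix c :: "'a \<Rightarrow> int"
  interpret mg "carrier G" "word_dist G S" "\<one>\<^bsub>G\<^esub>"
    using mg_inst[OF assms(1,3,4,5,2,6)] .
  obtain psi where psi: "\<forall>x\<in>carrier G. \<forall>y\<in>carrier G. word_dist G S x y \<ge> 2 \<longrightarrow> psi x y = 0"
    "\<forall>v\<in>carrier G. (\<Sum>x\<in>{x\<in>carrier G. word_dist G S x v < 2}. psi x v)
        - (\<Sum>y\<in>{y\<in>carrier G. word_dist G S v y < 2}. psi v y) = c v"
    using main[of c] by blast
  show "\<exists>(R::nat) (psi :: 'a \<Rightarrow> 'a \<Rightarrow> int). R > 0 \<and>
           (\<forall>x\<in>carrier G. \<forall>y\<in>carrier G. word_dist G S x y \<ge> R \<longrightarrow> [psi x y = 0] (mod int p)) \<and>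
           (\<forall>v\<in>carrier G. [chain_boundary G S R psi v = c v] (mod int p))"
    using psi by (intro exI[of _ 2] exI[of _ psi]) (auto simp: chain_boundary_def)
qed

end
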